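(* Let $\alpha$ be a snowy weak composition. Then (1) $\mathsf{dark}(\alpha)=\{(r,\alpha_r):\alpha_r>0\}$; (2) $\mathsf{rajcode}(\alpha)_r=\alpha_r+|\{r'>r:\alpha_r<\alpha_{r'}\}|$ for every $r$; (3) $\mathsf{raj}(\alpha)=|\alpha|+|\{(r,r'):r<r',\ \alpha_r<\alpha_{r'}\}|$.
   Context: A weak composition is an infinite sequence of nonnegative integers with finitely many positive entries; it is snowy if its positive entries are distinct; $|\alpha|=\sum\alpha_i$. $D(\alpha)=\{(r,c):1\le c\le\alpha_r\}$ (row 1 on top). For a diagram $D$, $\mathsf{snow}(D)$ is built by iterating through rows from bottom to top: in row $r$ take the rightmost cell $(r,c)\in D$ such that column $c$ contains no dark cloud yet; if it exists label it a dark cloud and add snowflake cells at $(r',c)$ for all $r'<r$ with $(r',c)\notin D$. $\mathsf{dark}(\alpha)$ is the set of dark clouds of $\mathsf{snow}(D(\alpha))$, $\mathsf{rajcode}(\alpha)_i$ is the number of cells of $\mathsf{snow}(D(\alpha))$ in row $i$, and $\mathsf{raj}(\alpha)=|\mathsf{rajcode}(\alpha)|$. *)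

theory Defs
  imports Main
begin

text \<open>Weak compositions are modelled as functions nat => nat, indexed from 1
  (entry alpha 0 is required to be 0 and plays no role), with finite support.\<close>

definition weak_comp :: "(nat \<Rightarrow> nat) \<Rightarrow> bool" where
  "weak_comp \<alpha> \<longleftrightarrow> \<alpha> 0 = 0 \<and> finite {i. \<alpha> i > 0}"

definition snowy :: "(nat \<Rightarrow> nat) \<Rightarrow> bool" where
  "snowy \<alpha> \<longleftrightarrow> weak_comp \<alpha> \<and> inj_on \<alpha> {i. \<alpha> i > 0}"

definition wsize :: "(nat \<Rightarrow> nat) \<Rightarrow> nat" where
  "wsize \<beta> = (\<Sum>i\<in>{i. \<beta> i \<noteq> 0}. \<beta> i)"

definition diag :: "(nat \<Rightarrow> nat) \<Rightarrow> (nat \<times> nat) set" where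
  "diag \<alpha> = {(r, c). 1 \<le> r \<and> 1 \<le> c \<and> c \<le> \<alpha> r}"

text \<open>One step of the snow construction on row r. State = (dark clouds, snowflakes).\<close>
definition snow_step ::
  "(nat \<times> nat) set \<Rightarrow> nat \<Rightarrow> (nat \<times> nat) set \<times> (nat \<times> nat) set
     \<Rightarrow> (nat \<times> nat) set \<times> (nat \<times> nat) set" where
  "snow_step D r st =
     (let dk = fst st; sn = snd st;
          cols = {c. (r, c) \<in> D \<and> c \<notin> snd ` dk}
      in if cols = {} then st
         else (let c = Max cols in
               (insert (r, c) dk, sn \<union> {(r', c) | r'. 1 \<le> r' \<and> r' < r \<and> (r', c) \<notin> D})))"

text \<open>Lowest (i.e. largest-index) nonempty row of a finite diagram.\<close>
definition bottom_row :: "(nat \<times> nat) set \<Rightarrow> nat" where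
  "bottom_row D = (if D = {} then 0 else Max (fst ` D))"

definition snow_state :: "(nat \<times> nat) set \<Rightarrow> (nat \<times> nat) set \<times> (nat \<times> nat) set" where
  "snow_state D = foldl (\<lambda>st r. snow_step D r st) ({}, {}) (rev [1..<Suc (bottom_row D)])"

definition snow :: "(nat \<times> nat) set \<Rightarrow> (nat \<times> nat) set" where
  "snow D = D \<union> snd (snow_state D)"

definition dark_clouds :: "(nat \<times> nat) set \<Rightarrow> (nat \<times> nat) set" where
  "dark_clouds D = fst (snow_state D)"

definition dark :: "(nat \<Rightarrow> nat) \<Rightarrow> (nat \<times> nat) set" where
  "dark \<alpha> = dark_clouds (diag \<alpha>)"

definition rajcode :: "(nat \<Rightarrow> nat) \<Rightarrow> nat \<Rightarrow> nat" where
  "rajcode \<alpha> i = card {c. (i, c) \<in> snow (diag \<alpha>)}"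

definition raj :: "(nat \<Rightarrow> nat) \<Rightarrow> nat" where
  "raj \<alpha> = wsize (rajcode \<alpha>)"

end

theory Submission
  imports Defs
begin

definition DK :: "(nat \<Rightarrow> nat) \<Rightarrow> nat \<Rightarrow> (nat \<times> nat) set" where
  "DK \<alpha> m = {(r, \<alpha> r) | r. m \<le> r \<and> \<alpha> r > 0}"

definition SN :: "(nat \<Rightarrow> nat) \<Rightarrow> nat \<Rightarrow> (nat \<times> nat) set" where
  "SN \<alpha> m = {(r', \<alpha> r) | r r'. m \<le> r \<and> \<alpha> r > 0 \<and> 1 \<le> r' \<and> r' < r \<and> \<alpha> r' < \<alpha> r}"

lemma step_inv:
  assumes sn: "snowy \<alpha>" and m: "1 \<le> m"
  shows "snow_step (diag \<alpha>) m (DK \<alpha> (Suc m), SN \<alpha> (Suc m)) = (DK \<alpha> m, SN \<alpha> m)"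
proof (cases "\<alpha> m = 0")
  case True
  have "DK \<alpha> m = DK \<alpha> (Suc m)" using True unfolding DK_def
    by (auto simp: le_eq_less_or_eq Suc_le_eq)
  moreover have "SN \<alpha> m = SN \<alpha> (Suc m)" using True unfolding SN_def
    by (fastforce simp: le_eq_less_or_eq Suc_le_eq)
  ultimately show ?thesis using True unfolding snow_step_def diag_def by simp
next
  case False
  have inj: "inj_on \<alpha> {i. \<alpha> i > 0}" using sn unfolding snowy_def by simp
  define cols where "cols = {c. (m, c) \<in> diag \<alpha> \<and> c \<notin> snd ` DK \<alpha> (Suc m)}"
  have sndDK: "snd ` DK \<alpha> (Suc m) = {\<alpha> r | r. Suc m \<le> r \<and> \<alpha> r > 0}"
    unfolding DK_def by force
  have mem: "\<alpha> m \<in> cols"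
  proof -
    have neq: "\<alpha> r \<noteq> \<alpha> m" if "Suc m \<le> r" "\<alpha> r > 0" for r
    proof
      assume eq: "\<alpha> r = \<alpha> m"
      have "r \<in> {i. \<alpha> i > 0}" "m \<in> {i. \<alpha> i > 0}" using that False by auto
      then have "r = m" using inj_onD[OF inj eq] by blast
      then show False using that(1) by simp
    qed
    have "\<alpha> m \<notin> {\<alpha> r | r. Suc m \<le> r \<and> \<alpha> r > 0}"
    proof
      assume "\<alpha> m \<in> {\<alpha> r | r. Suc m \<le> r \<and> \<alpha> r > 0}"
      then obtain r where "\<alpha> m = \<alpha> r" "Suc m \<le> r" "\<alpha> r > 0" by blast
      then show False using neq[of r] by simp
    qed
    then have "\<alpha> m \<notin> snd ` DK \<alpha> (Suc m)" unfolding sndDK .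
    moreover have "(m, \<alpha> m) \<in> diag \<alpha>" using False m unfolding diag_def by simp
    ultimately show ?thesis unfolding cols_def by blast
  qed
  have bnd: "\<forall>y\<in>cols. y \<le> \<alpha> m" unfolding cols_def diag_def by auto
  have fin: "finite cols" using bnd by (meson finite_atMost finite_subset atMost_iff subsetI)
  have mx: "Max cols = \<alpha> m" using Max_eqI[OF fin _ mem] bnd by blast
  have ne: "cols \<noteq> {}" using mem by auto
  have d1: "insert (m, \<alpha> m) (DK \<alpha> (Suc m)) = DK \<alpha> m" using False unfolding DK_def
    by (auto simp: le_eq_less_or_eq Suc_le_eq)
  have d2: "SN \<alpha> (Suc m) \<union> {(r', \<alpha> m) | r'. 1 \<le> r' \<and> r' < m \<and> (r', \<alpha> m) \<notin> diag \<alpha>} = SN \<alpha> m"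
  proof -
    have key: "{(r', \<alpha> m) | r'. 1 \<le> r' \<and> r' < m \<and> (r', \<alpha> m) \<notin> diag \<alpha>}
       = {(r', \<alpha> m) | r'. 1 \<le> r' \<and> r' < m \<and> \<alpha> r' < \<alpha> m}"
      using False by (auto simp: diag_def)
    have "SN \<alpha> m = SN \<alpha> (Suc m) \<union> {(r', \<alpha> m) | r'. 1 \<le> r' \<and> r' < m \<and> \<alpha> r' < \<alpha> m}"
    proof (rule set_eqI, rule iffI)
      fix x assume "x \<in> SN \<alpha> m"
      then obtain r r' where x: "x = (r', \<alpha> r)" "m \<le> r" "\<alpha> r > 0" "1 \<le> r'" "r' < r" "\<alpha> r' < \<alpha> r"
        unfolding SN_def by blast
      show "x \<in> SN \<alpha> (Suc m) \<union> {(r', \<alpha> m) | r'. 1 \<le> r' \<and> r' < m \<and> \<alpha> r' < \<alpha> m}"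
      proof (cases "r = m")
        case True
        then show ?thesis using x by blast
      next
        case False
        then have "Suc m \<le> r" using x by simp
        then have "x \<in> SN \<alpha> (Suc m)" using x unfolding SN_def by blast
        then show ?thesis by blast
      qed
    next
      fix x assume "x \<in> SN \<alpha> (Suc m) \<union> {(r', \<alpha> m) | r'. 1 \<le> r' \<and> r' < m \<and> \<alpha> r' < \<alpha> m}"
      then show "x \<in> SN \<alpha> m"
      proof
        assume "x \<in> SN \<alpha> (Suc m)"
        then obtain r r' where x: "x = (r', \<alpha> r)" "Suc m \<le> r" "\<alpha> r > 0" "1 \<le> r'" "r' < r" "\<alpha> r' < \<alpha> r"
          unfolding SN_def by blast
        then have "m \<le> r" by simp
        then show ?thesis using x unfolding SN_def by blast
      next
        assume "x \<in> {(r', \<alpha> m) | r'. 1 \<le> r' \<and> r' < m \<and> \<alpha> r' < \<alpha> m}"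
        then obtain r' where x: "x = (r', \<alpha> m)" "1 \<le> r'" "r' < m" "\<alpha> r' < \<alpha> m" by blast
        have "m \<le> m" by simp
        then show ?thesis using x False unfolding SN_def by blast
      qed
    qed
    then show ?thesis using key by simp
  qed
  show ?thesis unfolding snow_step_def Let_def
    using ne mx d1 d2 by (simp add: cols_def[symmetric])
qed

lemma state_inv:
  assumes sn: "snowy \<alpha>" and N: "\<forall>r. 0 < \<alpha> r \<longrightarrow> r \<le> N" and m: "1 \<le> m" "m \<le> Suc N"
  shows "foldl (\<lambda>st r. snow_step (diag \<alpha>) r st) ({}, {}) (rev [m..<Suc N]) = (DK \<alpha> m, SN \<alpha> m)"
  using m(2) m(1)
proof (induction m rule: inc_induct)
  case base
  have "DK \<alpha> (Suc N) = {}" using N unfolding DK_def by (smt (verit) Collect_empty_eq not_less_eq_eq)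
  moreover have "SN \<alpha> (Suc N) = {}" using N unfolding SN_def by (smt (verit) Collect_empty_eq not_less_eq_eq)
  ultimately show ?case by simp
next
  case (step n)
  have "[n..<Suc N] = n # [Suc n..<Suc N]" using step.hyps by (simp add: upt_rec)
  then have "rev [n..<Suc N] = rev [Suc n..<Suc N] @ [n]" by simp
  then have "foldl (\<lambda>st r. snow_step (diag \<alpha>) r st) ({}, {}) (rev [n..<Suc N]) =
     snow_step (diag \<alpha>) n (foldl (\<lambda>st r. snow_step (diag \<alpha>) r st) ({}, {}) (rev [Suc n..<Suc N]))"
    by (simp only: foldl_append foldl_Cons foldl_Nil)
  also have "\<dots> = snow_step (diag \<alpha>) n (DK \<alpha> (Suc n), SN \<alpha> (Suc n))"
    using step.IH step.prems by simp
  also have "\<dots> = (DK \<alpha> n, SN \<alpha> n)" using step_inv[OF sn step.prems] .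
  finally show ?case .
qed

lemma diag_finite:
  assumes "finite {i. \<alpha> i > 0}"
  shows "finite (diag \<alpha>)"
proof -
  have "diag \<alpha> \<subseteq> (\<Union>r\<in>{i. \<alpha> i > 0}. {r} \<times> {1..\<alpha> r})"
    unfolding diag_def by auto
  moreover have "finite (\<Union>r\<in>{i. \<alpha> i > 0}. {r} \<times> {1..\<alpha> r})" using assms by auto
  ultimately show ?thesis by (rule finite_subset)
qed

theorem lemma4p18:
  fixes \<alpha> :: "nat \<Rightarrow> nat"
  assumes "snowy \<alpha>"
  shows "dark \<alpha> = {(r, \<alpha> r) | r. 1 \<le> r \<and> \<alpha> r > 0} \<and>
         (\<forall>r\<ge>1. rajcode \<alpha> r = \<alpha> r + card {r'. r < r' \<and> \<alpha> r < \<alpha> r'}) \<and>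
         raj \<alpha> = wsize \<alpha> + card {(r, r'). 1 \<le> r \<and> r < r' \<and> \<alpha> r < \<alpha> r'}"
proof -
  have a0: "\<alpha> 0 = 0" and fs: "finite {i. \<alpha> i > 0}" and inj: "inj_on \<alpha> {i. \<alpha> i > 0}"
    using assms unfolding snowy_def weak_comp_def by auto
  define N where "N = bottom_row (diag \<alpha>)"
  have N: "\<forall>r. 0 < \<alpha> r \<longrightarrow> r \<le> N"
  proof (intro allI impI)
    fix r assume r: "0 < \<alpha> r"
    then have "r \<noteq> 0" using a0 using gr0I by force
    then have "(r, 1) \<in> diag \<alpha>" using r unfolding diag_def by auto
    then have "r \<in> fst ` diag \<alpha>" by force
    moreover have "finite (fst ` diag \<alpha>)" using diag_finite[OF fs] by simp
    ultimately have "r \<le> Max (fst ` diag \<alpha>)" by simp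
    then show "r \<le> N" unfolding N_def bottom_row_def using \<open>(r, 1) \<in> diag \<alpha>\<close> by auto
  qed
  have st: "snow_state (diag \<alpha>) = (DK \<alpha> 1, SN \<alpha> 1)"
    unfolding snow_state_def N_def[symmetric] using state_inv[OF assms N, of 1] by simp
  have P1: "dark \<alpha> = {(r, \<alpha> r) | r. 1 \<le> r \<and> \<alpha> r > 0}"
    unfolding dark_def dark_clouds_def st DK_def by simp
  have snoweq: "snow (diag \<alpha>) = diag \<alpha> \<union> SN \<alpha> 1" unfolding snow_def st by simp
  have P2: "rajcode \<alpha> i = \<alpha> i + card {r'. i < r' \<and> \<alpha> i < \<alpha> r'}" if i: "1 \<le> i" for i
  proof -
    define B where "B = {r'. i < r' \<and> \<alpha> i < \<alpha> r'}"
    have Bsub: "B \<subseteq> {i. \<alpha> i > 0}" unfolding B_def by auto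
    have Bfin: "finite B" using finite_subset[OF Bsub fs] .
    have row: "{c. (i, c) \<in> snow (diag \<alpha>)} = {1..\<alpha> i} \<union> \<alpha> ` B"
    proof (rule set_eqI, rule iffI)
      fix c assume "c \<in> {c. (i, c) \<in> snow (diag \<alpha>)}"
      then have "(i, c) \<in> diag \<alpha> \<or> (i, c) \<in> SN \<alpha> 1" unfolding snoweq by simp
      then show "c \<in> {1..\<alpha> i} \<union> \<alpha> ` B"
      proof
        assume "(i, c) \<in> diag \<alpha>" then show ?thesis unfolding diag_def by auto
      next
        assume "(i, c) \<in> SN \<alpha> 1"
        then obtain r where "c = \<alpha> r" "i < r" "\<alpha> i < \<alpha> r" unfolding SN_def by blast
        then show ?thesis unfolding B_def by blast
      qed
    next
      fix c assume "c \<in> {1..\<alpha> i} \<union> \<alpha> ` B"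
      then show "c \<in> {c. (i, c) \<in> snow (diag \<alpha>)}"
      proof
        assume "c \<in> {1..\<alpha> i}" then show ?thesis using i unfolding snoweq by (auto simp: diag_def)
      next
        assume "c \<in> \<alpha> ` B"
        then obtain r where r: "c = \<alpha> r" "i < r" "\<alpha> i < \<alpha> r" unfolding B_def by blast
        then have "1 \<le> r" "\<alpha> r > 0" using i by auto
        then have "(i, c) \<in> SN \<alpha> 1" using r i unfolding SN_def by blast
        then show ?thesis unfolding snoweq by simp
      qed
    qed
    have disj: "{1..\<alpha> i} \<inter> \<alpha> ` B = {}" unfolding B_def by auto
    have "card ({1..\<alpha> i} \<union> \<alpha> ` B) = card {1..\<alpha> i} + card (\<alpha> ` B)"
      by (rule card_Un_disjoint) (use Bfin disj in auto)
    also have "card (\<alpha> ` B) = card B" using inj_on_subset[OF inj Bsub] by (rule card_image)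
    finally show ?thesis unfolding rajcode_def row B_def by simp
  qed
  have z0: "rajcode \<alpha> 0 = 0"
  proof -
    have "{c. (0, c) \<in> snow (diag \<alpha>)} = {}" unfolding snoweq by (auto simp: diag_def SN_def)
    then show ?thesis unfolding rajcode_def by simp
  qed
  have zN: "rajcode \<alpha> i = 0" if "N < i" for i
  proof -
    have "\<alpha> i = 0" using N that by (meson not_le not_gr_zero)
    moreover have "{r'. i < r' \<and> \<alpha> i < \<alpha> r'} = {}"
    proof -
      have False if "i < x" "\<alpha> i < \<alpha> x" for x
      proof -
        have "x \<le> N" using N that(2) by auto
        then show False using that(1) \<open>N < i\<close> by simp
      qed
      then show ?thesis by blast
    qed
    moreover have "1 \<le> i" using that by simp
    ultimately show ?thesis using P2[of i] by (simp only: card.empty add_0)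
  qed
  have sub1: "{i. rajcode \<alpha> i \<noteq> 0} \<subseteq> {1..N}"
  proof
    fix i assume "i \<in> {i. rajcode \<alpha> i \<noteq> 0}"
    then have "i \<noteq> 0" "\<not> N < i" using z0 zN by (metis mem_Collect_eq)+
    then show "i \<in> {1..N}" by simp
  qed
  have sub2: "{i. \<alpha> i \<noteq> 0} \<subseteq> {1..N}"
  proof
    fix i assume "i \<in> {i. \<alpha> i \<noteq> 0}"
    then have "i \<noteq> 0" "i \<le> N" using a0 N by (metis mem_Collect_eq gr0I)+
    then show "i \<in> {1..N}" by simp
  qed
  have w1: "raj \<alpha> = (\<Sum>i\<in>{1..N}. rajcode \<alpha> i)"
    unfolding raj_def wsize_def by (rule sum.mono_neutral_left) (use sub1 in auto)
  have w2: "wsize \<alpha> = (\<Sum>i\<in>{1..N}. \<alpha> i)"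
    unfolding wsize_def by (rule sum.mono_neutral_left) (use sub2 in auto)
  define B where "B = (\<lambda>r. {r'. r < r' \<and> \<alpha> r < \<alpha> r'})"
  have Bfin: "finite (B r)" for r
    by (rule finite_subset[OF _ fs]) (auto simp: B_def)
  have sig: "{(r, r'). 1 \<le> r \<and> r < r' \<and> \<alpha> r < \<alpha> r'} = Sigma {1..N} B"
  proof (rule set_eqI)
    fix p :: "nat \<times> nat"
    obtain r r' where p: "p = (r, r')" by (cases p)
    have "r < r' \<and> \<alpha> r < \<alpha> r' \<Longrightarrow> r \<le> N" using N[rule_format, of r'] by auto
    then show "p \<in> {(r, r'). 1 \<le> r \<and> r < r' \<and> \<alpha> r < \<alpha> r'} \<longleftrightarrow> p \<in> Sigma {1..N} B"
      unfolding p B_def by auto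
  qed
  have "raj \<alpha> = (\<Sum>i\<in>{1..N}. \<alpha> i + card (B i))" unfolding w1 B_def
    using P2 by (intro sum.cong) auto
  also have "\<dots> = wsize \<alpha> + (\<Sum>i\<in>{1..N}. card (B i))" by (simp add: sum.distrib w2)
  also have "(\<Sum>i\<in>{1..N}. card (B i)) = card (Sigma {1..N} B)"
    by (rule card_SigmaI[symmetric]) (use Bfin in auto)
  finally have P3: "raj \<alpha> = wsize \<alpha> + card {(r, r'). 1 \<le> r \<and> r < r' \<and> \<alpha> r < \<alpha> r'}"
    unfolding sig .
  show ?thesis using P1 P2 P3 by blast
qed

end
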